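(* A finite simple graph $G$ admits an $\mathcal{F}$-free circular ordering if and only if $G$ is a forest.
   Context: A circular ordering of a finite set is obtained by placing its elements at distinct points of a circle; it is the set of triples $(x,y,z)$ of distinct elements such that clockwise from $x$ one meets $y$ before $z$. A circularly ordered graph is a graph together with a circular ordering of its vertices; isomorphism means a graph isomorphism preserving the circular orderings; $(H,C_H)$ is an induced circularly ordered subgraph of $(G,C_G)$ if $H$ is an induced subgraph of $G$ and $C_H$ is the restriction of $C_G$. A graph $G$ admits an $\mathcal{F}$-free circular ordering if there is a circular ordering $C$ of $V(G)$ such that no induced circularly ordered subgraph of $(G,C)$ is isomorphic to a member of $\mathcal{F}$. Here $\mathcal{F}$ consists of the following seven circularly ordered graphs, where in each case the vertices $v_1,v_2,\dots$ appear clockwise in this order and the listed edges are all the edges: (1) the triangle on $v_1,v_2,v_3$; (2) on $v_1,\dots,v_4$, edges $v_1v_2,v_2v_3,v_3v_4,v_4v_1$; (3) on $v_1,\dots,v_4$, edges $v_1v_2,v_2v_4,v_4v_3,v_3v_1$; (4) on $v_1,\dots,v_4$, edges $v_1v_3,v_2v_4$; (5) on $v_1,\dots,v_4$, edges $v_1v_3,v_1v_4,v_2v_4$; (6) on $v_1,\dots,v_5$, edges $v_1v_2,v_2v_3,v_3v_4,v_4v_5,v_5v_1$; (7) on $v_1,\dots,v_5$, edges $v_1v_2,v_2v_3,v_3v_4,v_4v_5$. *)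

theory Defs
  imports Main
begin

definition simple_graph :: "'a set \<Rightarrow> ('a \<Rightarrow> 'a \<Rightarrow> bool) \<Rightarrow> bool" where
  "simple_graph V E \<longleftrightarrow> finite V \<and> (\<forall>x y. E x y \<longrightarrow> E y x)
     \<and> (\<forall>x. \<not> E x x) \<and> (\<forall>x y. E x y \<longrightarrow> x \<in> V \<and> y \<in> V)"

text \<open>Clockwise relation induced by positions on a circle (positions are distinct
naturals read clockwise): clockwise from x one meets y before z.\<close>

definition cyc_pos :: "('a \<Rightarrow> nat) \<Rightarrow> 'a \<Rightarrow> 'a \<Rightarrow> 'a \<Rightarrow> bool" where
  "cyc_pos p x y z \<longleftrightarrow>
     (p x < p y \<and> p y < p z) \<or> (p y < p z \<and> p z < p x) \<or> (p z < p x \<and> p x < p y)"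

definition circular_ordering :: "'a set \<Rightarrow> ('a \<Rightarrow> 'a \<Rightarrow> 'a \<Rightarrow> bool) \<Rightarrow> bool" where
  "circular_ordering V C \<longleftrightarrow>
     (\<exists>p. inj_on p V \<and>
        (\<forall>x y z. C x y z \<longleftrightarrow> x \<in> V \<and> y \<in> V \<and> z \<in> V \<and>
                  x \<noteq> y \<and> y \<noteq> z \<and> x \<noteq> z \<and> cyc_pos p x y z))"

text \<open>A circularly ordered pattern graph: vertices 0,...,k-1 appearing clockwise
in this order (i.e. v_1,...,v_k with v_{i+1} represented by i), together with its
list of edges.\<close>

type_synonym pattern = "nat \<times> (nat \<times> nat) list"

definition pat_adj :: "pattern \<Rightarrow> nat \<Rightarrow> nat \<Rightarrow> bool" where
  "pat_adj P i j \<longleftrightarrow> (i, j) \<in> set (snd P) \<or> (j, i) \<in> set (snd P)"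

definition contains_pattern ::
  "'a set \<Rightarrow> ('a \<Rightarrow> 'a \<Rightarrow> bool) \<Rightarrow> ('a \<Rightarrow> 'a \<Rightarrow> 'a \<Rightarrow> bool) \<Rightarrow> pattern \<Rightarrow> bool" where
  "contains_pattern V E C P \<longleftrightarrow>
     (\<exists>g. inj_on g {0..<fst P} \<and> g ` {0..<fst P} \<subseteq> V \<and>
        (\<forall>i<fst P. \<forall>j<fst P. E (g i) (g j) \<longleftrightarrow> pat_adj P i j) \<and>
        (\<forall>i<fst P. \<forall>j<fst P. \<forall>l<fst P. i \<noteq> j \<and> j \<noteq> l \<and> i \<noteq> l \<longrightarrow>
            (C (g i) (g j) (g l) \<longleftrightarrow> cyc_pos id i j l)))"

text \<open>The family F of seven forbidden circularly ordered graphs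
(vertex v_m is represented by index m-1).\<close>

definition forbidden :: "pattern list" where
  "forbidden =
    [ (3, [(0,1),(1,2),(2,0)]),
      (4, [(0,1),(1,2),(2,3),(3,0)]),
      (4, [(0,1),(1,3),(3,2),(2,0)]),
      (4, [(0,2),(1,3)]),
      (4, [(0,2),(0,3),(1,3)]),
      (5, [(0,1),(1,2),(2,3),(3,4),(4,0)]),
      (5, [(0,1),(1,2),(2,3),(3,4)]) ]"

definition admits_F_free_circular_ordering :: "'a set \<Rightarrow> ('a \<Rightarrow> 'a \<Rightarrow> bool) \<Rightarrow> bool" where
  "admits_F_free_circular_ordering V E \<longleftrightarrow>
     (\<exists>C. circular_ordering V C \<and> (\<forall>P\<in>set forbidden. \<not> contains_pattern V E C P))"

definition is_forest :: "'a set \<Rightarrow> ('a \<Rightarrow> 'a \<Rightarrow> bool) \<Rightarrow> bool" where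
  "is_forest V E \<longleftrightarrow>
     \<not> (\<exists>cs. length cs \<ge> 3 \<and> distinct cs \<and> set cs \<subseteq> V \<and>
            (\<forall>i. Suc i < length cs \<longrightarrow> E (cs ! i) (cs ! Suc i)) \<and>
            E (last cs) (hd cs))"

end

theory Submission
  imports Defs
begin


lemma all_less3: "(\<forall>i<(3::nat). P i) \<longleftrightarrow> P 0 \<and> P 1 \<and> P 2"
  by (auto simp: numeral_eq_Suc less_Suc_eq)
lemma all_less4: "(\<forall>i<(4::nat). P i) \<longleftrightarrow> P 0 \<and> P 1 \<and> P 2 \<and> P 3"
  by (auto simp: numeral_eq_Suc less_Suc_eq)
lemma all_less5: "(\<forall>i<(5::nat). P i) \<longleftrightarrow> P 0 \<and> P 1 \<and> P 2 \<and> P 3 \<and> P 4"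
  by (auto simp: numeral_eq_Suc less_Suc_eq)

lemma cyc_rot: "cyc_pos p x y z \<longleftrightarrow> cyc_pos p y z x"
  by (auto simp: cyc_pos_def)

lemma cyc_asym: "cyc_pos p x y z \<Longrightarrow> \<not> cyc_pos p z y x"
  by (auto simp: cyc_pos_def)

definition CO :: "'a set \<Rightarrow> ('a \<Rightarrow> nat) \<Rightarrow> 'a \<Rightarrow> 'a \<Rightarrow> 'a \<Rightarrow> bool" where
  "CO V p x y z \<longleftrightarrow> x \<in> V \<and> y \<in> V \<and> z \<in> V \<and> x \<noteq> y \<and> y \<noteq> z \<and> x \<noteq> z \<and> cyc_pos p x y z"

lemma circ_CO: "inj_on p V \<Longrightarrow> circular_ordering V (CO V p)"
  unfolding circular_ordering_def CO_def by blast

lemma circ_E: "circular_ordering V C \<Longrightarrow> \<exists>p. inj_on p V \<and> C = CO V p"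
  unfolding circular_ordering_def CO_def by (auto intro!: ext)

lemma pat_intro:
  assumes "inj_on g {0..<k}" "g ` {0..<k} \<subseteq> V" "fst P = k"
    "\<forall>i<k. \<forall>j<k. E (g i) (g j) \<longleftrightarrow> pat_adj P i j"
    "\<And>i j l. i < j \<Longrightarrow> j < l \<Longrightarrow> l < k \<Longrightarrow> cyc_pos p (g i) (g j) (g l)"
  shows "contains_pattern V E (CO V p) P"
proof -
 have X: "CO V p (g i) (g j) (g l) = cyc_pos id i j l"
   if il: "i < fst P" "j < fst P" "l < fst P" and d: "i \<noteq> j \<and> j \<noteq> l \<and> i \<noteq> l" for i j l
 proof -
  have gd: "g i \<noteq> g j" "g j \<noteq> g l" "g i \<noteq> g l" using d il assms(1,3)
    by (auto dest: inj_onD)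
  have gV: "g i \<in> V" "g j \<in> V" "g l \<in> V" using il assms(2,3) by auto
  have "cyc_pos p (g i) (g j) (g l) = cyc_pos id i j l"
  proof (cases "i < j")
    case True
    then show ?thesis
    proof (cases "j < l")
      case True
      then show ?thesis using \<open>i<j\<close> assms(5)[of i j l] il assms(3) by (simp add: cyc_pos_def)
    next
      case False
      then have "l < j" using d by auto
      then show ?thesis
      proof (cases "i < l")
        case True
        then have "cyc_pos p (g i) (g l) (g j)" using assms(5)[of i l j] il assms(3) \<open>l<j\<close> by simp
        then show ?thesis using cyc_asym[of p "g i" "g l" "g j"] cyc_rot[of p] True \<open>l<j\<close>
          by (auto simp: cyc_pos_def)
      next
        case False
        then have "l < i" using d by auto
        then have "cyc_pos p (g l) (g i) (g j)" using assms(5)[of l i j] il assms(3) \<open>i<j\<close> by simp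
        then show ?thesis using cyc_rot[of p] \<open>l<i\<close> \<open>i<j\<close>
          by (auto simp: cyc_pos_def)
      qed
    qed
  next
    case False
    then have "j < i" using d by auto
    then show ?thesis
    proof (cases "i < l")
      case True
      then have "cyc_pos p (g j) (g i) (g l)" using assms(5)[of j i l] il assms(3) \<open>j<i\<close> by simp
      then show ?thesis using \<open>j<i\<close> True by (auto simp: cyc_pos_def)
    next
      case False
      then have "l < i" using d by auto
      then show ?thesis
      proof (cases "j < l")
        case True
        then have "cyc_pos p (g j) (g l) (g i)" using assms(5)[of j l i] il assms(3) \<open>l<i\<close> by simp
        then show ?thesis using True \<open>l<i\<close> by (auto simp: cyc_pos_def)
      next
        case False
        then have "l < j" using d by auto
        then have "cyc_pos p (g l) (g j) (g i)" using assms(5)[of l j i] il assms(3) \<open>j<i\<close> by simp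
        then show ?thesis using \<open>l<j\<close> \<open>j<i\<close> by (auto simp: cyc_pos_def)
      qed
    qed
  qed
  then show "CO V p (g i) (g j) (g l) = cyc_pos id i j l"
    using gd gV by (simp add: CO_def)
 qed
 show ?thesis unfolding contains_pattern_def
   apply (rule exI[of _ g]) using assms X by auto
qed



definition NC :: "('a \<Rightarrow> 'a \<Rightarrow> bool) \<Rightarrow> ('a \<Rightarrow> nat) \<Rightarrow> bool" where
  "NC E p \<longleftrightarrow> (\<forall>a b c d. E a b \<longrightarrow> E c d \<longrightarrow> cyc_pos p a c b \<longrightarrow> cyc_pos p b d a \<longrightarrow> False)"

definition good :: "'a set \<Rightarrow> ('a \<Rightarrow> 'a \<Rightarrow> bool) \<Rightarrow> ('a \<Rightarrow> nat) \<Rightarrow> ('a \<Rightarrow> bool) \<Rightarrow> bool" where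
  "good V E p col \<longleftrightarrow> inj_on p V \<and> (\<forall>a b. E a b \<longrightarrow> col a \<noteq> col b) \<and> NC E p \<and>
    (\<forall>u x y z. col u \<longrightarrow> E u x \<longrightarrow> E x y \<longrightarrow> E y z \<longrightarrow> cyc_pos p u z y \<longrightarrow> cyc_pos p u y x \<longrightarrow> False) \<and>
    (\<forall>u x y z. \<not> col u \<longrightarrow> E u x \<longrightarrow> E x y \<longrightarrow> E y z \<longrightarrow> cyc_pos p u x y \<longrightarrow> cyc_pos p u y z \<longrightarrow> False)"

lemma forest_noncycle:
  assumes "is_forest V E" "distinct cs" "3 \<le> length cs" "set cs \<subseteq> V"
    "\<forall>i. Suc i < length cs \<longrightarrow> E (cs!i) (cs!Suc i)" "E (last cs) (hd cs)"
  shows False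
  using assms unfolding is_forest_def by blast

lemma inj_ne: "inj_on g {0..<(k::nat)} \<Longrightarrow> i < k \<Longrightarrow> j < k \<Longrightarrow> i \<noteq> j \<Longrightarrow> g i \<noteq> g j"
  using inj_onD[of g "{0..<k}" i j] by auto

lemma CO_cyc: "CO V p x y z \<Longrightarrow> cyc_pos p x y z"
  by (simp add: CO_def)

lemma no_pattern:
  assumes sg: "simple_graph V E" and F: "is_forest V E" and G: "good V E p col"
    and P: "P \<in> set forbidden"
  shows "\<not> contains_pattern V E (CO V p) P"
proof
  assume cp: "contains_pattern V E (CO V p) P"
  then obtain g where gi: "inj_on g {0..<fst P}" and gV: "g ` {0..<fst P} \<subseteq> V"
    and ga: "\<forall>i<fst P. \<forall>j<fst P. E (g i) (g j) \<longleftrightarrow> pat_adj P i j"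
    and go: "\<forall>i<fst P. \<forall>j<fst P. \<forall>l<fst P. i \<noteq> j \<and> j \<noteq> l \<and> i \<noteq> l \<longrightarrow>
            (CO V p (g i) (g j) (g l) \<longleftrightarrow> cyc_pos id i j l)"
    unfolding contains_pattern_def by blast
  have ord: "cyc_pos p (g i) (g j) (g l)" if "i < fst P" "j < fst P" "l < fst P" "cyc_pos id i j l" for i j l
  proof -
    have "i \<noteq> j \<and> j \<noteq> l \<and> i \<noteq> l" using that(4) by (auto simp: cyc_pos_def)
    then show ?thesis using go that by (auto intro: CO_cyc)
  qed
  have adj: "E (g i) (g j)" if "i < fst P" "j < fst P" "pat_adj P i j" for i j
    using ga that by blast
  have nadj: "\<not> E (g i) (g j)" if "i < fst P" "j < fst P" "\<not> pat_adj P i j" for i j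
    using ga that by blast
  have ne: "g i \<noteq> g j" if "i < fst P" "j < fst P" "i \<noteq> j" for i j
    using inj_ne[OF gi] that by blast
  have inV: "g i \<in> V" if "i < fst P" for i using gV that by auto
  have NCp: "NC E p" and colp: "\<forall>a b. E a b \<longrightarrow> col a \<noteq> col b"
    and A: "\<forall>u x y z. col u \<longrightarrow> E u x \<longrightarrow> E x y \<longrightarrow> E y z \<longrightarrow> cyc_pos p u z y \<longrightarrow> cyc_pos p u y x \<longrightarrow> False"
    and B: "\<forall>u x y z. \<not> col u \<longrightarrow> E u x \<longrightarrow> E x y \<longrightarrow> E y z \<longrightarrow> cyc_pos p u x y \<longrightarrow> cyc_pos p u y z \<longrightarrow> False"
    using G unfolding good_def by auto
  from P consider
      "P = (3, [(0,1),(1,2),(2,0)])" | "P = (4, [(0,1),(1,2),(2,3),(3,0)])" |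
      "P = (4, [(0,1),(1,3),(3,2),(2,0)])" | "P = (4, [(0,2),(1,3)])" |
      "P = (4, [(0,2),(0,3),(1,3)])" | "P = (5, [(0,1),(1,2),(2,3),(3,4),(4,0)])" |
      "P = (5, [(0,1),(1,2),(2,3),(3,4)])"
    unfolding forbidden_def by auto
  then show False
  proof cases
    case 1
    show False
      apply (rule forest_noncycle[OF F, of "[g 0, g 1, g 2]"])
      using ne inV adj by (auto simp: 1 pat_adj_def less_Suc_eq numeral_eq_Suc)
  next
    case 2
    show False
      apply (rule forest_noncycle[OF F, of "[g 0, g 1, g 2, g 3]"])
      using ne inV adj by (auto simp: 2 pat_adj_def less_Suc_eq numeral_eq_Suc)
  next
    case 3
    show False
      apply (rule forest_noncycle[OF F, of "[g 0, g 1, g 3, g 2]"])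
      using ne inV adj by (auto simp: 3 pat_adj_def less_Suc_eq numeral_eq_Suc)
  next
    case 6
    show False
      apply (rule forest_noncycle[OF F, of "[g 0, g 1, g 2, g 3, g 4]"])
      using ne inV adj by (auto simp: 6 pat_adj_def less_Suc_eq numeral_eq_Suc)
  next
    case 4
    have "E (g 0) (g 2)" "E (g 1) (g 3)" using adj by (auto simp: 4 pat_adj_def)
    moreover have "cyc_pos p (g 0) (g 1) (g 2)" "cyc_pos p (g 2) (g 3) (g 0)"
      using ord by (auto simp: 4 cyc_pos_def)
    ultimately show False using NCp unfolding NC_def by blast
  next
    case 5
    have "E (g 0) (g 2)" "E (g 1) (g 3)" using adj by (auto simp: 5 pat_adj_def)
    moreover have "cyc_pos p (g 0) (g 1) (g 2)" "cyc_pos p (g 2) (g 3) (g 0)"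
      using ord by (auto simp: 5 cyc_pos_def)
    ultimately show False using NCp unfolding NC_def by blast
  next
    case 7
    have e: "E (g 0) (g 1)" "E (g 1) (g 2)" "E (g 2) (g 3)" "E (g 3) (g 4)"
      "E (g 1) (g 0)" "E (g 2) (g 1)" "E (g 3) (g 2)" "E (g 4) (g 3)"
      using adj by (auto simp: 7 pat_adj_def)
    have o: "cyc_pos p (g 0) (g 1) (g 2)" "cyc_pos p (g 0) (g 2) (g 3)"
      "cyc_pos p (g 4) (g 1) (g 2)" "cyc_pos p (g 4) (g 2) (g 3)"
      using ord by (auto simp: 7 cyc_pos_def)
    have c0: "col (g 0)" using B e o by blast
    have c4: "\<not> col (g 4)" using A e o by blast
    have "col (g 0) = col (g 2)" "col (g 2) = col (g 4)" using colp e by blast+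
    then show False using c0 c4 by simp
  qed
qed



lemma cyc_mono:
  assumes "\<forall>x y. x \<noteq> v \<longrightarrow> y \<noteq> v \<longrightarrow> (q x < q y \<longleftrightarrow> p x < p y)"
    "a \<noteq> v" "b \<noteq> v" "c \<noteq> v"
  shows "cyc_pos q a b c = cyc_pos p a b c"
  using assms unfolding cyc_pos_def by metis

lemma good_leaf:
  assumes G: "good V' E' p col"
    and E': "E' = (\<lambda>a b. E a b \<and> a \<noteq> v \<and> b \<noteq> v)"
    and sym: "\<forall>x y. E x y \<longrightarrow> E y x" and irr: "\<forall>x. \<not> E x x"
    and Eins: "\<forall>x y. E x y \<longrightarrow> x \<in> insert v V' \<and> y \<in> insert v V'"
    and vn: "v \<notin> V'"
    and Ev: "\<forall>w. E v w \<longleftrightarrow> w = u"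
    and H1: "\<forall>x y. x \<noteq> v \<longrightarrow> y \<noteq> v \<longrightarrow> (q x < q y \<longleftrightarrow> p x < p y)"
    and H2: "(col u \<longrightarrow> q v = Suc (q u)) \<and> (\<not> col u \<longrightarrow> q u = Suc (q v))"
    and H3: "\<forall>w. w \<noteq> v \<longrightarrow> q w \<noteq> q v"
  shows "good (insert v V') E q (col(v := \<not> col u))"
proof -
  let ?c = "col(v := \<not> col u)"
  have inj: "inj_on p V'" and NCp: "NC E' p" and colp: "\<forall>a b. E' a b \<longrightarrow> col a \<noteq> col b"
    and A: "\<forall>u x y z. col u \<longrightarrow> E' u x \<longrightarrow> E' x y \<longrightarrow> E' y z \<longrightarrow> cyc_pos p u z y \<longrightarrow> cyc_pos p u y x \<longrightarrow> False"
    and B: "\<forall>u x y z. \<not> col u \<longrightarrow> E' u x \<longrightarrow> E' x y \<longrightarrow> E' y z \<longrightarrow> cyc_pos p u x y \<longrightarrow> cyc_pos p u y z \<longrightarrow> False"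
    using G unfolding good_def by auto
  have Ev2: "E w v \<longleftrightarrow> w = u" for w using Ev sym by blast
  have uv: "u \<noteq> v" using Ev irr by metis
  have Eo: "E a b \<Longrightarrow> a \<noteq> v \<Longrightarrow> b \<noteq> v \<Longrightarrow> E' a b" for a b using E' by simp
  have cq: "a \<noteq> v \<Longrightarrow> b \<noteq> v \<Longrightarrow> c \<noteq> v \<Longrightarrow> cyc_pos q a b c = cyc_pos p a b c" for a b c
    using cyc_mono[OF H1] by blast
  have qne: "q w \<noteq> q v" if "w \<noteq> v" for w using H3 that by blast
  have injq: "inj_on q (insert v V')"
  proof (rule inj_onI)
    fix x y assume "x \<in> insert v V'" "y \<in> insert v V'" "q x = q y"
    then show "x = y"
    proof (cases "x = v \<or> y = v")
      case True then show ?thesis using qne \<open>q x = q y\<close> by metis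
    next
      case False
      then have "p x = p y" using H1 \<open>q x = q y\<close> by (metis linorder_neqE_nat less_irrefl)
      then show ?thesis using inj False \<open>x \<in> insert v V'\<close> \<open>y \<in> insert v V'\<close> by (auto dest: inj_onD)
    qed
  qed
  have colq: "\<forall>a b. E a b \<longrightarrow> ?c a \<noteq> ?c b"
  proof (intro allI impI)
    fix a b assume "E a b"
    show "?c a \<noteq> ?c b"
    proof (cases "a = v \<or> b = v")
      case True
      then show ?thesis using \<open>E a b\<close> Ev Ev2 uv by auto
    next
      case False then show ?thesis using \<open>E a b\<close> colp Eo by auto
    qed
  qed
  have NCq: "NC E q" unfolding NC_def
  proof (intro allI impI)
    fix a b c d assume ab: "E a b" and cd: "E c d" and h1: "cyc_pos q a c b" and h2: "cyc_pos q b d a"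
    show False
    proof (cases "a = v \<or> b = v \<or> c = v \<or> d = v")
      case False
      then show False using NCp ab cd h1 h2 cq Eo unfolding NC_def by metis
    next
      case True
      then consider "a = v" "b = u" | "b = v" "a = u" | "c = v" "d = u" | "d = v" "c = u"
        using ab cd Ev Ev2 by blast
      then show False
      proof cases
        case 1
        then show False using h1 h2 H2 qne[of b] qne[of c] qne[of d] unfolding cyc_pos_def by (cases "col u") auto
      next
        case 2
        then show False using h1 h2 H2 qne[of b] qne[of c] qne[of d] unfolding cyc_pos_def by (cases "col u") auto
      next
        case 3
        then show False using h1 h2 H2 qne[of b] qne[of a] qne[of d] unfolding cyc_pos_def by (cases "col u") auto
      next
        case 4
        then show False using h1 h2 H2 qne[of b] qne[of a] qne[of c] unfolding cyc_pos_def by (cases "col u") auto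
      qed
    qed
  qed
  have Aq: "\<forall>a x y z. ?c a \<longrightarrow> E a x \<longrightarrow> E x y \<longrightarrow> E y z \<longrightarrow> cyc_pos q a z y \<longrightarrow> cyc_pos q a y x \<longrightarrow> False"
  proof (intro allI impI)
    fix a x y z assume ca: "?c a" and e1: "E a x" and e2: "E x y" and e3: "E y z"
      and h1: "cyc_pos q a z y" and h2: "cyc_pos q a y x"
    have d: "a \<noteq> y" "a \<noteq> x" "x \<noteq> z" using h1 h2 by (auto simp: cyc_pos_def)
    show False
    proof (cases "a = v \<or> x = v \<or> y = v \<or> z = v")
      case False
      then show False using A ca e1 e2 e3 h1 h2 cq Eo by (metis fun_upd_other)
    next
      case True
      then consider "a = v" | "x = v" | "y = v" | "z = v" by blast
      then show False
      proof cases
        case 1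
        then have "x = u" using e1 Ev by blast
        then show False using h1 h2 H2 ca 1 qne[of y] qne[of z] unfolding cyc_pos_def by auto
      next
        case 2
        then show False using e1 e2 Ev Ev2 d by metis
      next
        case 3
        then show False using e2 e3 Ev Ev2 d by metis
      next
        case 4
        then have yu: "y = u" using e3 Ev2 by blast
        have av: "a \<noteq> v" using yu e1 e2 Ev irr by metis
        have xv: "x \<noteq> v" using e1 Ev2 d yu by metis
        have "col a \<noteq> col x" "col x \<noteq> col u" using colp Eo e1 e2 av xv yu uv by auto
        then have cu: "col u" using ca av by auto
        have "q v = Suc (q u)" using H2 cu by blast
        then show False using h1 4 yu qne[of a] unfolding cyc_pos_def by auto
      qed
    qed
  qed
  have Bq: "\<forall>a x y z. \<not> ?c a \<longrightarrow> E a x \<longrightarrow> E x y \<longrightarrow> E y z \<longrightarrow> cyc_pos q a x y \<longrightarrow> cyc_pos q a y z \<longrightarrow> False"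
  proof (intro allI impI)
    fix a x y z assume ca: "\<not> ?c a" and e1: "E a x" and e2: "E x y" and e3: "E y z"
      and h1: "cyc_pos q a x y" and h2: "cyc_pos q a y z"
    have d: "a \<noteq> y" "a \<noteq> x" "x \<noteq> z" using h1 h2 by (auto simp: cyc_pos_def)
    show False
    proof (cases "a = v \<or> x = v \<or> y = v \<or> z = v")
      case False
      then show False using B ca e1 e2 e3 h1 h2 cq Eo by (metis fun_upd_other)
    next
      case True
      then consider "a = v" | "x = v" | "y = v" | "z = v" by blast
      then show False
      proof cases
        case 1
        then have "x = u" using e1 Ev by blast
        then show False using h1 h2 H2 ca 1 qne[of y] qne[of z] unfolding cyc_pos_def by auto
      next
        case 2
        then show False using e1 e2 Ev Ev2 d by metis
      next
        case 3
        then show False using e2 e3 Ev Ev2 d by metis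
      next
        case 4
        then have yu: "y = u" using e3 Ev2 by blast
        have av: "a \<noteq> v" using yu e1 e2 Ev irr by metis
        have xv: "x \<noteq> v" using e1 Ev2 d yu by metis
        have "col a \<noteq> col x" "col x \<noteq> col u" using colp Eo e1 e2 av xv yu uv by auto
        then have cu: "\<not> col u" using ca av by auto
        have "q u = Suc (q v)" using H2 cu by blast
        then show False using h2 4 yu qne[of a] unfolding cyc_pos_def by auto
      qed
    qed
  qed
  show ?thesis unfolding good_def using injq colq NCq Aq Bq by blast
qed



lemma good_iso:
  assumes G: "good V' E' p col"
    and E': "E' = (\<lambda>a b. E a b \<and> a \<noteq> v \<and> b \<noteq> v)"
    and sym: "\<forall>x y. E x y \<longrightarrow> E y x"
    and vn: "v \<notin> V'"
    and Ev: "\<forall>w. \<not> E v w"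
  shows "good (insert v V') E (\<lambda>x. if x = v then 0 else Suc (p x)) col"
proof -
  let ?q = "\<lambda>x. if x = v then 0 else Suc (p x)"
  have inj: "inj_on p V'" and NCp: "NC E' p" and colp: "\<forall>a b. E' a b \<longrightarrow> col a \<noteq> col b"
    and A: "\<forall>u x y z. col u \<longrightarrow> E' u x \<longrightarrow> E' x y \<longrightarrow> E' y z \<longrightarrow> cyc_pos p u z y \<longrightarrow> cyc_pos p u y x \<longrightarrow> False"
    and B: "\<forall>u x y z. \<not> col u \<longrightarrow> E' u x \<longrightarrow> E' x y \<longrightarrow> E' y z \<longrightarrow> cyc_pos p u x y \<longrightarrow> cyc_pos p u y z \<longrightarrow> False"
    using G unfolding good_def by auto
  have Ev2: "\<not> E w v" for w using Ev sym by blast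
  have EE: "E a b \<Longrightarrow> E' a b" for a b using E' Ev Ev2 by auto
  have H1: "\<forall>x y. x \<noteq> v \<longrightarrow> y \<noteq> v \<longrightarrow> (?q x < ?q y \<longleftrightarrow> p x < p y)" by simp
  have cq: "a \<noteq> v \<Longrightarrow> b \<noteq> v \<Longrightarrow> c \<noteq> v \<Longrightarrow> cyc_pos ?q a b c = cyc_pos p a b c" for a b c
    using cyc_mono[OF H1] by blast
  have Ea: "E a b \<Longrightarrow> a \<noteq> v \<and> b \<noteq> v" for a b using Ev Ev2 by metis
  have injq: "inj_on ?q (insert v V')"
    using inj vn unfolding inj_on_def by auto
  have NCq: "NC E ?q" unfolding NC_def
  proof (intro allI impI)
    fix a b c d assume "E a b" "E c d" "cyc_pos ?q a c b" "cyc_pos ?q b d a"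
    then show False using NCp EE Ea cq unfolding NC_def by metis
  qed
  have Aq: "\<forall>a x y z. col a \<longrightarrow> E a x \<longrightarrow> E x y \<longrightarrow> E y z \<longrightarrow> cyc_pos ?q a z y \<longrightarrow> cyc_pos ?q a y x \<longrightarrow> False"
  proof (intro allI impI)
    fix a x y z assume "col a" "E a x" "E x y" "E y z" "cyc_pos ?q a z y" "cyc_pos ?q a y x"
    then show False using A EE Ea cq by metis
  qed
  have Bq: "\<forall>a x y z. \<not> col a \<longrightarrow> E a x \<longrightarrow> E x y \<longrightarrow> E y z \<longrightarrow> cyc_pos ?q a x y \<longrightarrow> cyc_pos ?q a y z \<longrightarrow> False"
  proof (intro allI impI)
    fix a x y z assume "\<not> col a" "E a x" "E x y" "E y z" "cyc_pos ?q a x y" "cyc_pos ?q a y z"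
    then show False using B EE Ea cq by metis
  qed
  show ?thesis unfolding good_def using injq colp EE NCq Aq Bq by blast
qed

lemma good_leaf2:
  assumes G: "good V' E' p col"
    and E': "E' = (\<lambda>a b. E a b \<and> a \<noteq> v \<and> b \<noteq> v)"
    and sym: "\<forall>x y. E x y \<longrightarrow> E y x" and irr: "\<forall>x. \<not> E x x"
    and Eins: "\<forall>x y. E x y \<longrightarrow> x \<in> insert v V' \<and> y \<in> insert v V'"
    and vn: "v \<notin> V'"
    and Ev: "\<forall>w. E v w \<longleftrightarrow> w = u"
  shows "\<exists>q c. good (insert v V') E q c"
proof -
  have uv: "u \<noteq> v" using Ev irr by metis
  define q where "q = (if col u then (\<lambda>x. if x = v then Suc (p u) else if p u < p x then Suc (p x) else p x)
     else (\<lambda>x. if x = v then p u else if p u \<le> p x then Suc (p x) else p x))"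
  have H1: "\<forall>x y. x \<noteq> v \<longrightarrow> y \<noteq> v \<longrightarrow> (q x < q y \<longleftrightarrow> p x < p y)"
    unfolding q_def by auto
  have H2: "(col u \<longrightarrow> q v = Suc (q u)) \<and> (\<not> col u \<longrightarrow> q u = Suc (q v))"
    unfolding q_def using uv by auto
  have H3: "\<forall>w. w \<noteq> v \<longrightarrow> q w \<noteq> q v"
    unfolding q_def by auto
  show ?thesis using good_leaf[OF G E' sym irr Eins vn Ev H1 H2 H3] by blast
qed



definition is_path :: "'a set \<Rightarrow> ('a \<Rightarrow> 'a \<Rightarrow> bool) \<Rightarrow> 'a list \<Rightarrow> bool" where
  "is_path V E ps \<longleftrightarrow> ps \<noteq> [] \<and> distinct ps \<and> set ps \<subseteq> V \<and> (\<forall>i. Suc i < length ps \<longrightarrow> E (ps!i) (ps!Suc i))"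

lemma leaf_exists:
  assumes fin: "finite V" and sg: "simple_graph V E" and F: "is_forest V E" and ne: "V \<noteq> {}"
  shows "\<exists>v\<in>V. \<forall>x y. E v x \<longrightarrow> E v y \<longrightarrow> x = y"
proof (rule ccontr)
  assume "\<not> ?thesis"
  then have two: "\<forall>v\<in>V. \<exists>x y. E v x \<and> E v y \<and> x \<noteq> y" by blast
  have sym: "\<forall>x y. E x y \<longrightarrow> E y x" and irr: "\<forall>x. \<not> E x x" and inV: "\<forall>x y. E x y \<longrightarrow> x \<in> V \<and> y \<in> V"
    using sg unfolding simple_graph_def by auto
  let ?L = "length ` {ps. is_path V E ps}"
  have Lb: "?L \<subseteq> {..card V}"
  proof
    fix n assume "n \<in> ?L"
    then obtain ps where "is_path V E ps" "n = length ps" by auto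
    then have "card (set ps) = n" "set ps \<subseteq> V" unfolding is_path_def by (auto simp: distinct_card)
    then show "n \<in> {..card V}" using card_mono[OF fin] by auto
  qed
  then have finL: "finite ?L" using finite_subset by blast
  obtain v0 where "v0 \<in> V" using ne by blast
  then have "is_path V E [v0]" unfolding is_path_def by auto
  then have Lne: "?L \<noteq> {}" by blast
  define m where "m = Max ?L"
  have "m \<in> ?L" unfolding m_def using finL Lne Max_in by blast
  then obtain ps where ps: "is_path V E ps" "length ps = m" by auto
  have maxm: "length qs \<le> m" if "is_path V E qs" for qs
    unfolding m_def using finL that by auto
  have psne: "ps \<noteq> []" and psd: "distinct ps" and psV: "set ps \<subseteq> V"
    and psE: "\<forall>i. Suc i < length ps \<longrightarrow> E (ps!i) (ps!Suc i)"
    using ps(1) unfolding is_path_def by auto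
  define x where "x = ps ! 0"
  have xV: "x \<in> V" using psne psV unfolding x_def by (simp add: subset_iff)
  have allin: "y \<in> set ps" if "E x y" for y
  proof (rule ccontr)
    assume yn: "y \<notin> set ps"
    have "is_path V E (y # ps)"
      unfolding is_path_def
    proof (intro conjI allI impI)
      show "distinct (y # ps)" using yn psd by simp
      show "set (y # ps) \<subseteq> V" using psV inV that by auto
      fix i assume "Suc i < length (y # ps)"
      then show "E ((y # ps) ! i) ((y # ps) ! Suc i)"
        using psE sym that unfolding x_def by (cases i) auto
    qed simp
    then show False using maxm ps(2) by fastforce
  qed
  obtain y1 y2 where y12: "E x y1" "E x y2" "y1 \<noteq> y2" using two xV by blast
  obtain y where yE: "E x y" and ny: "length ps \<ge> 2 \<longrightarrow> y \<noteq> ps ! 1"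
    using y12 by metis
  have "y \<in> set ps" using allin yE by blast
  then obtain j where j: "j < length ps" "ps ! j = y" by (auto simp: in_set_conv_nth)
  have j0: "j \<noteq> 0" using j yE irr unfolding x_def by (metis)
  have j1: "j \<noteq> 1" using j ny by auto
  let ?cs = "take (Suc j) ps"
  have "length ?cs = Suc j" using j by simp
  show False
  proof (rule forest_noncycle[OF F, of ?cs])
    show "distinct ?cs" using psd by simp
    show "3 \<le> length ?cs" using j j0 j1 by simp
    show "set ?cs \<subseteq> V" using psV set_take_subset by fastforce
    show "\<forall>i. Suc i < length ?cs \<longrightarrow> E (?cs ! i) (?cs ! Suc i)"
      using psE j by auto
    have "last ?cs = y" using j by (subst last_conv_nth) auto
    moreover have "hd ?cs = x" using psne unfolding x_def by (simp add: hd_conv_nth)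
    ultimately show "E (last ?cs) (hd ?cs)" using yE sym by auto
  qed
qed

lemma exists_good:
  "\<forall>V E. card V = n \<longrightarrow> finite V \<longrightarrow> simple_graph V E \<longrightarrow> is_forest V E \<longrightarrow> (\<exists>p col. good V E p col)"
proof (induction n)
  case 0
  show ?case
  proof (intro allI impI)
    fix V :: "'a set" and E assume "card V = 0" "finite V" "simple_graph V E"
    then have "V = {}" "\<forall>x y. \<not> E x y" unfolding simple_graph_def by auto
    then show "\<exists>p col. good V E p col" unfolding good_def NC_def by auto
  qed
next
  case (Suc n)
  show ?case
  proof (intro allI impI)
    fix V :: "'a set" and E assume cV: "card V = Suc n" and fin: "finite V"
      and sg: "simple_graph V E" and F: "is_forest V E"
    have sym: "\<forall>x y. E x y \<longrightarrow> E y x" and irr: "\<forall>x. \<not> E x x" and inV: "\<forall>x y. E x y \<longrightarrow> x \<in> V \<and> y \<in> V"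
      using sg unfolding simple_graph_def by auto
    have "V \<noteq> {}" using cV by auto
    then obtain v where vV: "v \<in> V" and leaf: "\<forall>x y. E v x \<longrightarrow> E v y \<longrightarrow> x = y"
      using leaf_exists[OF fin sg F] by blast
    define V' where "V' = V - {v}"
    define E' where "E' = (\<lambda>a b. E a b \<and> a \<noteq> v \<and> b \<noteq> v)"
    have VV: "V = insert v V'" "v \<notin> V'" using vV unfolding V'_def by auto
    have cV': "card V' = n" using cV vV fin unfolding V'_def by simp
    have fin': "finite V'" using fin unfolding V'_def by simp
    have sg': "simple_graph V' E'" using sg unfolding simple_graph_def E'_def V'_def by auto
    have F': "is_forest V' E'"
      using F unfolding is_forest_def E'_def V'_def by blast
    obtain p col where G: "good V' E' p col" using Suc.IH cV' fin' sg' F' by blast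
    have Eins: "\<forall>x y. E x y \<longrightarrow> x \<in> insert v V' \<and> y \<in> insert v V'" using inV VV by auto
    show "\<exists>p col. good V E p col"
    proof (cases "\<exists>u. E v u")
      case True
      then obtain u where "E v u" by blast
      then have "\<forall>w. E v w \<longleftrightarrow> w = u" using leaf by blast
      then show ?thesis using good_leaf2[OF G E'_def sym irr Eins VV(2)] VV(1) by blast
    next
      case False
      then show ?thesis using good_iso[OF G E'_def sym VV(2)] VV(1) by blast
    qed
  qed
qed



lemma pat_list:
  assumes "distinct xs" "set xs \<subseteq> V" "fst P = k" "length xs = k"
    "\<forall>i<k. \<forall>j<k. E (xs!i) (xs!j) \<longleftrightarrow> pat_adj P i j"
    "\<And>i j l. i < j \<Longrightarrow> j < l \<Longrightarrow> l < k \<Longrightarrow> cyc_pos p (xs!i) (xs!j) (xs!l)"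
  shows "contains_pattern V E (CO V p) P"
proof (rule pat_intro[of "nth xs" "length xs"])
  show "inj_on ((!) xs) {0..<length xs}" using assms(1) by (simp add: inj_on_nth)
  show "(!) xs ` {0..<length xs} \<subseteq> V" using assms(2) by auto
qed (use assms in auto)

lemma trip3: "i < j \<Longrightarrow> j < l \<Longrightarrow> l < (3::nat) \<Longrightarrow> i = 0 \<and> j = 1 \<and> l = 2"
  by linarith
lemma trip4: "i < j \<Longrightarrow> j < l \<Longrightarrow> l < (4::nat) \<Longrightarrow>
   (i = 0 \<and> j = 1 \<and> l = 2) \<or> (i = 0 \<and> j = 1 \<and> l = 3) \<or> (i = 0 \<and> j = 2 \<and> l = 3) \<or> (i = 1 \<and> j = 2 \<and> l = 3)"
  by linarith
lemma trip5: "i < j \<Longrightarrow> j < l \<Longrightarrow> l < (5::nat) \<Longrightarrow>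
   (i = 0 \<and> j = 1 \<and> l = 2) \<or> (i = 0 \<and> j = 1 \<and> l = 3) \<or> (i = 0 \<and> j = 2 \<and> l = 3) \<or> (i = 1 \<and> j = 2 \<and> l = 3) \<or>
   (i = 0 \<and> j = 1 \<and> l = 4) \<or> (i = 0 \<and> j = 2 \<and> l = 4) \<or> (i = 0 \<and> j = 3 \<and> l = 4) \<or>
   (i = 1 \<and> j = 2 \<and> l = 4) \<or> (i = 1 \<and> j = 3 \<and> l = 4) \<or> (i = 2 \<and> j = 3 \<and> l = 4)"
  by presburger

lemma forb: "(3, [(0,1),(1,2),(2,0)]) \<in> set forbidden" "(4, [(0,1),(1,2),(2,3),(3,0)]) \<in> set forbidden"
      "(4, [(0,1),(1,3),(3,2),(2,0)]) \<in> set forbidden" "(4, [(0,2),(1,3)]) \<in> set forbidden"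
      "(4, [(0,2),(0,3),(1,3)]) \<in> set forbidden" "(5, [(0,1),(1,2),(2,3),(3,4),(4,0)]) \<in> set forbidden"
      "(5, [(0,1),(1,2),(2,3),(3,4)]) \<in> set forbidden"
  by (simp_all add: forbidden_def)

lemma triangle_pat:
  assumes inj: "inj_on p V" and V: "x \<in> V" "y \<in> V" "z \<in> V"
    and e: "E x y" "E y z" "E z x" and sym: "\<forall>x y. E x y \<longrightarrow> E y x" and irr: "\<forall>x. \<not> E x x"
  shows "\<exists>P\<in>set forbidden. contains_pattern V E (CO V p) P"
proof -
  have d: "x \<noteq> y" "y \<noteq> z" "x \<noteq> z" using e irr by metis+
  have pd: "p x \<noteq> p y" "p y \<noteq> p z" "p x \<noteq> p z" using d V inj by (auto dest: inj_onD)
  have e2: "E y x" "E z y" "E x z" using e sym by blast+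
  show ?thesis
  proof (cases "cyc_pos p x y z")
    case True
    have "contains_pattern V E (CO V p) (3, [(0,1),(1,2),(2,0)])"
      apply (rule pat_list[where xs="[x,y,z]" and k=3])
          using d apply auto[1]
         apply (simp add: V)
        apply simp
       apply simp
       apply (simp add: all_less3 pat_adj_def e e2 irr)
      apply (drule (2) trip3) using True by auto
    then show ?thesis using forb by blast
  next
    case False
    then have "cyc_pos p x z y" using pd unfolding cyc_pos_def by auto
    have "contains_pattern V E (CO V p) (3, [(0,1),(1,2),(2,0)])"
      apply (rule pat_list[where xs="[x,z,y]" and k=3])
          using d apply auto[1]
         apply (simp add: V)
        apply simp
       apply simp
       apply (simp add: all_less3 pat_adj_def e e2 irr)
      apply (drule (2) trip3) using \<open>cyc_pos p x z y\<close> by auto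
    then show ?thesis using forb by blast
  qed
qed



lemma pat4:
  assumes "distinct [w0,w1,w2,w3]" "set [w0,w1,w2,w3] \<subseteq> V" "fst P = 4"
    "\<forall>i<4. \<forall>j<4. E ([w0,w1,w2,w3]!i) ([w0,w1,w2,w3]!j) \<longleftrightarrow> pat_adj P i j"
    "cyc_pos p w0 w1 w2" "cyc_pos p w0 w1 w3" "cyc_pos p w0 w2 w3" "cyc_pos p w1 w2 w3"
  shows "contains_pattern V E (CO V p) P"
  apply (rule pat_list[where xs="[w0,w1,w2,w3]" and k=4])
       apply (rule assms(1))
      apply (rule assms(2))
     apply (rule assms(3))
    apply simp
   apply (rule assms(4))
  apply (drule (2) trip4) using assms(5-8) by auto

lemma cross_pat:
  assumes V: "a \<in> V" "b \<in> V" "c \<in> V" "d \<in> V"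
    and e: "E a b" "E c d" and h1: "cyc_pos p a c b" and h2: "cyc_pos p b d a"
    and sym: "\<forall>x y. E x y \<longrightarrow> E y x" and irr: "\<forall>x. \<not> E x x"
    and tri: "\<forall>x y z. E x y \<longrightarrow> E y z \<longrightarrow> E z x \<longrightarrow> False"
  shows "\<exists>P\<in>set forbidden. contains_pattern V E (CO V p) P"
proof -
  have pd: "p a \<noteq> p b" "p a \<noteq> p c" "p a \<noteq> p d" "p b \<noteq> p c" "p b \<noteq> p d" "p c \<noteq> p d"
    using h1 h2 unfolding cyc_pos_def by auto
  then have dd: "distinct [a,c,b,d]" "distinct [c,b,d,a]" "distinct [b,d,a,c]" "distinct [d,a,c,b]" by auto
  have sV: "set [a,c,b,d] \<subseteq> V" "set [c,b,d,a] \<subseteq> V" "set [b,d,a,c] \<subseteq> V" "set [d,a,c,b] \<subseteq> V"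
    using V by auto
  have c1: "cyc_pos p a c b" "cyc_pos p a c d" "cyc_pos p a b d" "cyc_pos p c b d"
    using h1 h2 unfolding cyc_pos_def by auto
  have c2: "cyc_pos p c b d" "cyc_pos p c b a" "cyc_pos p c d a" "cyc_pos p b d a"
    using h1 h2 unfolding cyc_pos_def by auto
  have c3: "cyc_pos p b d a" "cyc_pos p b d c" "cyc_pos p b a c" "cyc_pos p d a c"
    using h1 h2 unfolding cyc_pos_def by auto
  have c4: "cyc_pos p d a c" "cyc_pos p d a b" "cyc_pos p d c b" "cyc_pos p a c b"
    using h1 h2 unfolding cyc_pos_def by auto
  have ee: "E a b" "E b a" "E c d" "E d c" "\<not> E a a" "\<not> E b b" "\<not> E c c" "\<not> E d d"
    using e sym irr by blast+
  have sy: "E c a = E a c" "E b c = E c b" "E d b = E b d" "E a d = E d a" using sym by blast+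
  have nt: "\<not> (E a c \<and> E c b)" "\<not> (E c b \<and> E b d)" "\<not> (E b d \<and> E d a)" "\<not> (E d a \<and> E a c)"
    using tri e sym by metis+
  consider "\<not> E a c" "\<not> E c b" "\<not> E b d" "\<not> E d a"
    | "E a c" "\<not> E c b" "\<not> E b d" "\<not> E d a"
    | "\<not> E a c" "E c b" "\<not> E b d" "\<not> E d a"
    | "\<not> E a c" "\<not> E c b" "E b d" "\<not> E d a"
    | "\<not> E a c" "\<not> E c b" "\<not> E b d" "E d a"
    | "E a c" "\<not> E c b" "E b d" "\<not> E d a"
    | "\<not> E a c" "E c b" "\<not> E b d" "E d a"
    using nt by blast
  then show ?thesis
  proof cases
    case 1
    have "contains_pattern V E (CO V p) (4, [(0,2),(1,3)])"
      apply (rule pat4[OF dd(1) sV(1)])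
      using c1 1 by (simp_all add: all_less4 pat_adj_def ee sy)
    then show ?thesis using forb by blast
  next
    case 2
    have "contains_pattern V E (CO V p) (4, [(0,2),(0,3),(1,3)])"
      apply (rule pat4[OF dd(2) sV(2)])
      using c2 2 by (simp_all add: all_less4 pat_adj_def ee sy)
    then show ?thesis using forb by blast
  next
    case 3
    have "contains_pattern V E (CO V p) (4, [(0,2),(0,3),(1,3)])"
      apply (rule pat4[OF dd(3) sV(3)])
      using c3 3 by (simp_all add: all_less4 pat_adj_def ee sy)
    then show ?thesis using forb by blast
  next
    case 4
    have "contains_pattern V E (CO V p) (4, [(0,2),(0,3),(1,3)])"
      apply (rule pat4[OF dd(4) sV(4)])
      using c4 4 by (simp_all add: all_less4 pat_adj_def ee sy)
    then show ?thesis using forb by blast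
  next
    case 5
    have "contains_pattern V E (CO V p) (4, [(0,2),(0,3),(1,3)])"
      apply (rule pat4[OF dd(1) sV(1)])
      using c1 5 by (simp_all add: all_less4 pat_adj_def ee sy)
    then show ?thesis using forb by blast
  next
    case 6
    have "contains_pattern V E (CO V p) (4, [(0,1),(1,3),(3,2),(2,0)])"
      apply (rule pat4[OF dd(1) sV(1)])
      using c1 6 by (simp_all add: all_less4 pat_adj_def ee sy)
    then show ?thesis using forb by blast
  next
    case 7
    have "contains_pattern V E (CO V p) (4, [(0,1),(1,3),(3,2),(2,0)])"
      apply (rule pat4[OF dd(2) sV(2)])
      using c2 7 by (simp_all add: all_less4 pat_adj_def ee sy)
    then show ?thesis using forb by blast
  qed
qed



definition cycW :: "'a set \<Rightarrow> ('a \<Rightarrow> 'a \<Rightarrow> bool) \<Rightarrow> (nat \<Rightarrow> 'a) \<Rightarrow> nat \<Rightarrow> bool" where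
  "cycW V E W n \<longleftrightarrow> 3 \<le> n \<and> (\<forall>i. W (i mod n) = W i) \<and> inj_on W {..<n} \<and> (\<forall>i. W i \<in> V)
     \<and> (\<forall>i. E (W i) (W (Suc i)))"

lemma list_cycW:
  assumes "distinct cs" "3 \<le> length cs" "set cs \<subseteq> V"
    "\<forall>i. Suc i < length cs \<longrightarrow> E (cs!i) (cs!Suc i)" "E (last cs) (hd cs)"
  shows "cycW V E (\<lambda>i. cs ! (i mod length cs)) (length cs)"
  unfolding cycW_def
proof (intro conjI allI)
  let ?n = "length cs"
  show "3 \<le> ?n" by fact
  fix i
  show "cs ! (i mod ?n mod ?n) = cs ! (i mod ?n)" by simp
  have im: "i mod ?n < ?n" using assms(2) by (intro mod_less_divisor) linarith
  then show "cs ! (i mod ?n) \<in> V" using assms(3) nth_mem by blast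
  show "E (cs ! (i mod ?n)) (cs ! (Suc i mod ?n))"
  proof (cases "Suc (i mod ?n) = ?n")
    case True
    then have "Suc i mod ?n = 0" by (simp add: mod_Suc)
    moreover have "i mod ?n = ?n - 1" using True by linarith
    moreover have "last cs = cs ! (?n - 1)" using assms(2) by (subst last_conv_nth) auto
    moreover have "hd cs = cs ! 0" using assms(2) by (subst hd_conv_nth) auto
    ultimately show ?thesis using assms(5) by simp
  next
    case False
    then have "Suc i mod ?n = Suc (i mod ?n)" by (simp add: mod_Suc)
    moreover have "Suc (i mod ?n) < ?n" using False im by linarith
    ultimately show ?thesis using assms(4) by simp
  qed
next
  show "inj_on (\<lambda>i. cs ! (i mod length cs)) {..<length cs}"
    using assms(1) by (simp add: inj_on_def nth_eq_iff_index_eq)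
qed

lemma rot_back: "(i::nat) < n \<Longrightarrow> ((i + s) mod n + (n - s mod n)) mod n = i"
proof -
  assume i: "i < n"
  then have n: "n > 0" by simp
  have sm: "s mod n < n" using n by simp
  have "((i + s) mod n + (n - s mod n)) mod n = ((i + s) + (n - s mod n)) mod n" by (simp add: mod_add_left_eq)
  also have "(i + s) + (n - s mod n) = i + n * (s div n + 1)"
  proof -
    have e: "s = n * (s div n) + s mod n" by simp
    have "(i + s) + (n - s mod n) = i + n + n * (s div n)" using sm e by linarith
    then show ?thesis by (simp add: algebra_simps)
  qed
  also have "(i + n * (s div n + 1)) mod n = i" using i by (metis mod_less mod_mult_self2 mult.commute)
  finally show ?thesis .
qed

lemma cycW_rot:
  assumes "cycW V E W n"
  shows "cycW V E (\<lambda>i. W (i + s)) n"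
  unfolding cycW_def
proof (intro conjI allI)
  have per: "\<forall>i. W (i mod n) = W i" and inj: "inj_on W {..<n}" and n: "3 \<le> n"
    using assms unfolding cycW_def by auto
  show "3 \<le> n" by fact
  fix i
  show "W (i mod n + s) = W (i + s)" by (metis per mod_add_left_eq)
  show "W (i + s) \<in> V" using assms unfolding cycW_def by auto
  show "E (W (i + s)) (W (Suc i + s))" using assms unfolding cycW_def by auto
next
  have per: "\<forall>i. W (i mod n) = W i" and inj: "inj_on W {..<n}" and n: "3 \<le> n"
    using assms unfolding cycW_def by auto
  show "inj_on (\<lambda>i. W (i + s)) {..<n}"
  proof (rule inj_onI)
    fix i j assume ij: "i \<in> {..<n}" "j \<in> {..<n}" "W (i + s) = W (j + s)"
    then have "W ((i + s) mod n) = W ((j + s) mod n)" using per by metis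
    then have "(i + s) mod n = (j + s) mod n" using inj n by (auto dest: inj_onD)
    then show "i = j" using rot_back[of i n s] rot_back[of j n s] ij by (metis lessThan_iff)
  qed
qed

lemma cycW_rev:
  assumes "cycW V E W n" and sym: "\<forall>x y. E x y \<longrightarrow> E y x"
  shows "cycW V E (\<lambda>i. W (n - i mod n)) n"
  unfolding cycW_def
proof (intro conjI allI)
  have per: "\<forall>i. W (i mod n) = W i" and inj: "inj_on W {..<n}" and n: "3 \<le> n"
    and adj: "\<forall>i. E (W i) (W (Suc i))"
    using assms unfolding cycW_def by auto
  show "3 \<le> n" by fact
  fix i
  show "W (n - i mod n mod n) = W (n - i mod n)" by simp
  show "W (n - i mod n) \<in> V" using assms unfolding cycW_def by auto
  show "E (W (n - i mod n)) (W (n - Suc i mod n))"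
  proof (cases "Suc (i mod n) = n")
    case True
    then have "Suc i mod n = 0" by (simp add: mod_Suc)
    then have "W (n - Suc i mod n) = W 0" using per by (metis diff_zero mod_self)
    moreover have "n - i mod n = 1" using True by simp
    ultimately show ?thesis using adj sym by (metis One_nat_def)
  next
    case False
    then have "Suc i mod n = Suc (i mod n)" by (simp add: mod_Suc)
    moreover have "i mod n < n" using n by (intro mod_less_divisor) linarith
    moreover have "Suc (i mod n) < n" using False calculation(2) by linarith
    ultimately have "n - i mod n = Suc (n - Suc i mod n)" by simp
    then show ?thesis using adj sym by metis
  qed
next
  have per: "\<forall>i. W (i mod n) = W i" and inj: "inj_on W {..<n}" and n: "3 \<le> n"
    using assms unfolding cycW_def by auto
  show "inj_on (\<lambda>i. W (n - i mod n)) {..<n}"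
  proof (rule inj_onI)
    fix i j assume ij: "i \<in> {..<n}" "j \<in> {..<n}" "W (n - i mod n) = W (n - j mod n)"
    then have "W ((n - i) mod n) = W ((n - j) mod n)" using per by simp
    then have "(n - i) mod n = (n - j) mod n" using inj n by (auto dest: inj_onD)
    have f: "(n - k) mod n = (if k = 0 then 0 else n - k)" if "k < n" for k
      using that by auto
    show "i = j" using f[of i] f[of j] ij \<open>(n - i) mod n = (n - j) mod n\<close>
      by (auto split: if_splits)
  qed
qed



lemma chord_aux:
  assumes cyc: "cycW V E W n" and minl: "\<forall>W' m. cycW V E W' m \<longrightarrow> n \<le> m"
    and sym: "\<forall>x y. E x y \<longrightarrow> E y x"
    and ij: "i < j" "j < n" and e: "E (W i) (W j)"
  shows "j = Suc i \<or> (i = 0 \<and> j = n - 1)"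
proof (rule ccontr)
  assume nc: "\<not> ?thesis"
  have per: "\<forall>i. W (i mod n) = W i" and inj: "inj_on W {..<n}" and n: "3 \<le> n"
    and adj: "\<forall>i. E (W i) (W (Suc i))" and inV: "\<forall>i. W i \<in> V"
    using cyc unfolding cycW_def by auto
  define m where "m = j - i + 1"
  have m3: "3 \<le> m" and mn: "m < n" using nc ij unfolding m_def by auto
  have "cycW V E (\<lambda>k. W (i + k mod m)) m"
    unfolding cycW_def
  proof (intro conjI allI)
    show "3 \<le> m" by fact
    fix k
    show "W (i + k mod m mod m) = W (i + k mod m)" by simp
    show "W (i + k mod m) \<in> V" using inV by blast
    have km: "k mod m < m" using m3 by (intro mod_less_divisor) linarith
    show "E (W (i + k mod m)) (W (i + Suc k mod m))"
    proof (cases "Suc (k mod m) = m")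
      case True
      then have "Suc k mod m = 0" by (simp add: mod_Suc)
      moreover have "i + k mod m = j" using True ij unfolding m_def by linarith
      ultimately show ?thesis using e sym by simp
    next
      case False
      then have "Suc k mod m = Suc (k mod m)" by (simp add: mod_Suc)
      then show ?thesis using adj by (metis add_Suc_right)
    qed
  next
    show "inj_on (\<lambda>k. W (i + k mod m)) {..<m}"
    proof (rule inj_onI)
      fix k l assume kl: "k \<in> {..<m}" "l \<in> {..<m}" "W (i + k mod m) = W (i + l mod m)"
      then have "W (i + k) = W (i + l)" by simp
      moreover have "i + k < n" "i + l < n" using kl ij unfolding m_def by auto
      ultimately have "i + k = i + l" using inj by (auto dest: inj_onD)
      then show "k = l" by simp
    qed
  qed
  then show False using minl mn by fastforce
qed

lemma chordless:
  assumes cyc: "cycW V E W n" and minl: "\<forall>W' m. cycW V E W' m \<longrightarrow> n \<le> m"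
    and sym: "\<forall>x y. E x y \<longrightarrow> E y x" and irr: "\<forall>x. \<not> E x x"
    and ij: "i < n" "j < n" and e: "E (W i) (W j)"
  shows "j = Suc i mod n \<or> i = Suc j mod n"
proof -
  have "i \<noteq> j" using e irr by auto
  then consider "i < j" | "j < i" by linarith
  then show ?thesis
  proof cases
    case 1
    then have "j = Suc i \<or> (i = 0 \<and> j = n - 1)" using chord_aux[OF cyc minl sym 1 ij(2) e] by blast
    then show ?thesis using ij 1 by auto
  next
    case 2
    have e2: "E (W j) (W i)" using e sym by blast
    then have "i = Suc j \<or> (j = 0 \<and> i = n - 1)" using chord_aux[OF cyc minl sym 2 ij(1) e2] by blast
    then show ?thesis using ij 2 by auto
  qed
qed

lemma ivt_nat:
  fixes f :: "nat \<Rightarrow> nat"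
  shows "a \<le> b \<Longrightarrow> f a < c \<Longrightarrow> c < f b \<Longrightarrow> (\<forall>t. a \<le> t \<longrightarrow> t \<le> b \<longrightarrow> f t \<noteq> c) \<Longrightarrow>
    \<exists>t. a \<le> t \<and> t < b \<and> f t < c \<and> c < f (Suc t)"
proof (induction b)
  case 0
  then show ?case by auto
next
  case (Suc b)
  show ?case
  proof (cases "a = Suc b")
    case True
    then show ?thesis using Suc.prems by auto
  next
    case False
    then have ab: "a \<le> b" using Suc.prems by auto
    have "f b \<noteq> c" using Suc.prems ab by auto
    then consider "f b < c" | "c < f b" by linarith
    then show ?thesis
    proof cases
      case 1
      then show ?thesis using ab Suc.prems by auto
    next
      case 2
      then obtain t where "a \<le> t \<and> t < b \<and> f t < c \<and> c < f (Suc t)"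
        using Suc.IH[OF ab Suc.prems(2) 2] Suc.prems(4) by auto
      then show ?thesis by (intro exI[of _ t]) auto
    qed
  qed
qed

lemma incr:
  assumes cyc: "cycW V E W n" and inj: "inj_on p V" and NCp: "NC E p"
    and sym: "\<forall>x y. E x y \<longrightarrow> E y x"
    and mn: "\<forall>i. 0 < i \<longrightarrow> i < n \<longrightarrow> p (W 0) < p (W i)"
    and h: "p (W 1) < p (W (n - 1))"
  shows "i < n \<Longrightarrow> (\<forall>j. i < j \<longrightarrow> j < n \<longrightarrow> p (W i) < p (W j))"
proof (induction i)
  case 0
  then show ?case using mn by auto
next
  case (Suc i)
  have per: "\<forall>i. W (i mod n) = W i" and injW: "inj_on W {..<n}" and n: "3 \<le> n"
    and adj: "\<forall>i. E (W i) (W (Suc i))" and inV: "\<forall>i. W i \<in> V"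
    using cyc unfolding cycW_def by auto
  have pne: "p (W a) \<noteq> p (W b)" if "a < n" "b < n" "a \<noteq> b" for a b
  proof
    assume "p (W a) = p (W b)"
    then have "W a = W b" using inj inV by (auto dest: inj_onD)
    then show False using injW that by (auto dest: inj_onD)
  qed
  have IH: "\<forall>j. i < j \<longrightarrow> j < n \<longrightarrow> p (W i) < p (W j)" using Suc by auto
  show ?case
  proof (intro allI impI, rule ccontr)
    fix j assume j: "Suc i < j" "j < n" and nlt: "\<not> p (W (Suc i)) < p (W j)"
    then have lt: "p (W j) < p (W (Suc i))" using pne[of j "Suc i"] by linarith
    have nc: "\<And>a b c d. E a b \<Longrightarrow> E c d \<Longrightarrow> cyc_pos p a c b \<Longrightarrow> cyc_pos p b d a \<Longrightarrow> False"
      using NCp unfolding NC_def by blast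
    show False
    proof (cases "p (W (n - 1)) < p (W (Suc i))")
      case True
      have i0: "0 < i" using True h by (cases i) auto
      have "n - 1 > Suc i" using j by auto
      have e1: "E (W 0) (W (n - 1))"
      proof -
        have "E (W (n - 1)) (W (Suc (n - 1)))" using adj by blast
        moreover have "Suc (n - 1) = n" using n by auto
        moreover have "W n = W 0" using per by (metis mod_self)
        ultimately show ?thesis using sym by metis
      qed
      have "p (W 0) < p (W i)" using mn i0 Suc by auto
      moreover have "p (W i) < p (W (n - 1))" using IH \<open>n - 1 > Suc i\<close> n by auto
      ultimately show False using nc[OF e1 adj[rule_format, of i]] True unfolding cyc_pos_def by auto
    next
      case False
      then have gt: "p (W (Suc i)) < p (W (n - 1))" using pne[of "n - 1" "Suc i"] j by fastforce
      have "j \<noteq> n - 1" using gt lt by auto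
      then have "j \<le> n - 1" using j by auto
      have nn: "\<forall>t. j \<le> t \<longrightarrow> t \<le> n - 1 \<longrightarrow> p (W t) \<noteq> p (W (Suc i))"
      proof (intro allI impI)
        fix t assume "j \<le> t" "t \<le> n - 1"
        then show "p (W t) \<noteq> p (W (Suc i))" using pne[of t "Suc i"] j by auto
      qed
      obtain t where t: "j \<le> t" "t < n - 1" "p (W t) < p (W (Suc i))" "p (W (Suc i)) < p (W (Suc t))"
        using ivt_nat[of j "n - 1" "\<lambda>t. p (W t)" "p (W (Suc i))", OF \<open>j \<le> n - 1\<close> lt gt nn] by blast
      have "p (W i) < p (W t)" using IH t j by auto
      moreover have "p (W i) < p (W (Suc i))" using IH j by auto
      ultimately show False using nc[OF adj[rule_format, of i] adj[rule_format, of t]] t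
        unfolding cyc_pos_def by auto
    qed
  qed
qed



lemma final_pat:
  assumes cyc: "cycW V E W n" and n4: "4 \<le> n"
    and chl: "\<forall>i j. i < n \<longrightarrow> j < n \<longrightarrow> E (W i) (W j) \<longrightarrow> (j = Suc i mod n \<or> i = Suc j mod n)"
    and sym: "\<forall>x y. E x y \<longrightarrow> E y x"
    and inc: "\<forall>i. Suc i < n \<longrightarrow> p (W i) < p (W (Suc i))"
  shows "\<exists>P\<in>set forbidden. contains_pattern V E (CO V p) P"
proof -
  have per: "\<forall>i. W (i mod n) = W i" and injW: "inj_on W {..<n}"
    and adj: "\<forall>i. E (W i) (W (Suc i))" and inV: "\<forall>i. W i \<in> V"
    using cyc unfolding cycW_def by auto
  have lt: "i < j \<Longrightarrow> j < n \<Longrightarrow> p (W i) < p (W j)" for i j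
  proof (induction j)
    case 0 then show ?case by simp
  next
    case (Suc j)
    then show ?case using inc by (cases "i = j") (auto intro: less_trans)
  qed
  have Eiff: "E (W i) (W j) \<longleftrightarrow> (j = Suc i mod n \<or> i = Suc j mod n)" if "i < n" "j < n" for i j
  proof
    assume "E (W i) (W j)" then show "j = Suc i mod n \<or> i = Suc j mod n" using chl that by blast
  next
    assume "j = Suc i mod n \<or> i = Suc j mod n"
    then show "E (W i) (W j)" using adj sym per by metis
  qed
  have gen: "contains_pattern V E (CO V p) P"
    if k: "k \<le> n" "fst P = k" and ad: "\<forall>i<k. \<forall>j<k. E (W i) (W j) \<longleftrightarrow> pat_adj P i j" for k P
  proof (rule pat_list[where xs="map W [0..<k]" and k=k])
    show "distinct (map W [0..<k])"
      using injW k by (auto simp: distinct_map intro: inj_on_subset)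
    show "set (map W [0..<k]) \<subseteq> V" using inV by auto
    show "fst P = k" by fact
    show "length (map W [0..<k]) = k" by simp
    show "\<forall>i<k. \<forall>j<k. E (map W [0..<k] ! i) (map W [0..<k] ! j) = pat_adj P i j"
      using ad by simp
    fix i j l assume "i < j" "j < l" "l < k"
    then show "cyc_pos p (map W [0..<k] ! i) (map W [0..<k] ! j) (map W [0..<k] ! l)"
      using lt[of i j] lt[of j l] k unfolding cyc_pos_def by auto
  qed
  consider "n = 4" | "n = 5" | "6 \<le> n" using n4 by linarith
  then show ?thesis
  proof cases
    case 1
    have "\<forall>i<4. \<forall>j<4. E (W i) (W j) \<longleftrightarrow> pat_adj (4, [(0,1),(1,2),(2,3),(3,0)]) i j"
      unfolding all_less4 using Eiff 1 by (simp add: pat_adj_def)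
    then show ?thesis using gen[of 4] 1 forb by fastforce
  next
    case 2
    have "\<forall>i<5. \<forall>j<5. E (W i) (W j) \<longleftrightarrow> pat_adj (5, [(0,1),(1,2),(2,3),(3,4),(4,0)]) i j"
      unfolding all_less5 using Eiff 2 by (simp add: pat_adj_def)
    then show ?thesis using gen[of 5] 2 forb by fastforce
  next
    case 3
    have E5: "E (W i) (W j) \<longleftrightarrow> (j = Suc i \<or> i = Suc j)" if "i < 5" "j < 5" for i j
    proof -
      have "Suc i mod n = Suc i" "Suc j mod n = Suc j" using that 3 by auto
      then show ?thesis using Eiff[of i j] that 3 by auto
    qed
    have "\<forall>i<5. \<forall>j<5. E (W i) (W j) \<longleftrightarrow> pat_adj (5, [(0,1),(1,2),(2,3),(3,4)]) i j"
      unfolding all_less5 using E5 by (simp add: pat_adj_def)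
    then show ?thesis using gen[of 5] 3 forb by fastforce
  qed
qed



lemma finish:
  assumes cyc: "cycW V E W n" and minl: "\<forall>W' m. cycW V E W' m \<longrightarrow> n \<le> m" and n4: "4 \<le> n"
    and inj: "inj_on p V" and NCp: "NC E p"
    and sym: "\<forall>x y. E x y \<longrightarrow> E y x" and irr: "\<forall>x. \<not> E x x"
    and mn: "\<forall>i. 0 < i \<longrightarrow> i < n \<longrightarrow> p (W 0) < p (W i)"
    and h: "p (W 1) < p (W (n - 1))"
  shows "\<exists>P\<in>set forbidden. contains_pattern V E (CO V p) P"
proof (rule final_pat[OF cyc n4 _ sym])
  show "\<forall>i j. i < n \<longrightarrow> j < n \<longrightarrow> E (W i) (W j) \<longrightarrow> j = Suc i mod n \<or> i = Suc j mod n"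
    using chordless[OF cyc minl sym irr] by blast
  show "\<forall>i. Suc i < n \<longrightarrow> p (W i) < p (W (Suc i))"
    using incr[OF cyc inj NCp sym mn h] by auto
qed

lemma nonforest_pat:
  assumes sg: "simple_graph V E" and inj: "inj_on p V" and nf: "\<not> is_forest V E"
  shows "\<exists>P\<in>set forbidden. contains_pattern V E (CO V p) P"
proof -
  have sym: "\<forall>x y. E x y \<longrightarrow> E y x" and irr: "\<forall>x. \<not> E x x" and inV: "\<forall>x y. E x y \<longrightarrow> x \<in> V \<and> y \<in> V"
    using sg unfolding simple_graph_def by auto
  show ?thesis
  proof (cases "\<exists>x y z. E x y \<and> E y z \<and> E z x")
    case True
    then obtain x y z where "E x y" "E y z" "E z x" by blast
    then show ?thesis using triangle_pat[OF inj _ _ _ _ _ _ sym irr] inV by metis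
  next
    case False
    then have tri: "\<forall>x y z. E x y \<longrightarrow> E y z \<longrightarrow> E z x \<longrightarrow> False" by blast
    show ?thesis
    proof (cases "NC E p")
      case False
      then obtain a b c d where "E a b" "E c d" "cyc_pos p a c b" "cyc_pos p b d a"
        unfolding NC_def by blast
      then show ?thesis using cross_pat[OF _ _ _ _ _ _ _ _ sym irr tri] inV by metis
    next
      case True
      note NCp = True
      obtain cs where "distinct cs" "3 \<le> length cs" "set cs \<subseteq> V"
        "\<forall>i. Suc i < length cs \<longrightarrow> E (cs!i) (cs!Suc i)" "E (last cs) (hd cs)"
        using nf unfolding is_forest_def by blast
      then have ex: "\<exists>W. cycW V E W (length cs)" using list_cycW by blast
      define N where "N = (LEAST m. \<exists>W. cycW V E W m)"
      obtain W where cyc: "cycW V E W N" using LeastI_ex[of "\<lambda>m. \<exists>W. cycW V E W m"] ex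
        unfolding N_def by blast
      have minl: "\<forall>W' m. cycW V E W' m \<longrightarrow> N \<le> m"
        unfolding N_def by (auto intro: Least_le)
      have per: "\<forall>i. W (i mod N) = W i" and injW: "inj_on W {..<N}" and N3: "3 \<le> N"
        and adj: "\<forall>i. E (W i) (W (Suc i))" and WV: "\<forall>i. W i \<in> V"
        using cyc unfolding cycW_def by auto
      have N4: "4 \<le> N"
      proof (rule ccontr)
        assume "\<not> 4 \<le> N"
        then have "N = 3" using N3 by auto
        then have "W 3 = W 0" using per by (metis mod_self)
        moreover have "E (W 0) (W 1)" "E (W 1) (W 2)" "E (W 2) (W 3)"
          using adj by (simp_all add: numeral_eq_Suc)
        ultimately show False using tri by metis
      qed
      let ?S = "(\<lambda>i. p (W i)) ` {..<N}"
      have "0 \<in> {..<N}" using N3 by simp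
      then have "Min ?S \<in> ?S" by (intro Min_in) auto
      then obtain s where s: "s < N" "p (W s) = Min ?S" by auto
      have smin: "p (W s) \<le> p (W i)" if "i < N" for i
        using s that by simp
      define W1 where "W1 = (\<lambda>i. W (i + s))"
      have cyc1: "cycW V E W1 N" unfolding W1_def by (rule cycW_rot[OF cyc])
      have per1: "\<forall>i. W1 (i mod N) = W1 i" and injW1: "inj_on W1 {..<N}"
        using cyc1 unfolding cycW_def by auto
      have pne1: "p (W1 a) \<noteq> p (W1 b)" if "a < N" "b < N" "a \<noteq> b" for a b
      proof
        assume "p (W1 a) = p (W1 b)"
        then have "W1 a = W1 b" using inj WV unfolding W1_def by (auto dest: inj_onD)
        then show False using injW1 that by (auto dest: inj_onD)
      qed
      have mn1: "\<forall>i. 0 < i \<longrightarrow> i < N \<longrightarrow> p (W1 0) < p (W1 i)"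
      proof (intro allI impI)
        fix i assume "0 < i" "i < N"
        have "W1 i = W ((i + s) mod N)" unfolding W1_def using per by metis
        moreover have "(i + s) mod N < N" using N3 by simp
        ultimately have "p (W1 0) \<le> p (W1 i)" using smin unfolding W1_def by simp
        moreover have "p (W1 0) \<noteq> p (W1 i)" using pne1[of 0 i] \<open>0 < i\<close> \<open>i < N\<close> by auto
        ultimately show "p (W1 0) < p (W1 i)" by simp
      qed
      show ?thesis
      proof (cases "p (W1 1) < p (W1 (N - 1))")
        case True
        show ?thesis by (rule finish[OF cyc1 minl N4 inj NCp sym irr mn1 True])
      next
        case False
        define W2 where "W2 = (\<lambda>i. W1 (N - i mod N))"
        have cyc2: "cycW V E W2 N" unfolding W2_def by (rule cycW_rev[OF cyc1 sym])
        have w0: "W2 0 = W1 0" unfolding W2_def using per1 by (metis diff_zero mod_0 mod_self)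
        have w1: "W2 1 = W1 (N - 1)" unfolding W2_def using N3 by simp
        have wn: "W2 (N - 1) = W1 1" unfolding W2_def using N3 by simp
        have mn2: "\<forall>i. 0 < i \<longrightarrow> i < N \<longrightarrow> p (W2 0) < p (W2 i)"
        proof (intro allI impI)
          fix i assume "0 < i" "i < N"
          then have "W2 i = W1 (N - i)" unfolding W2_def by simp
          then show "p (W2 0) < p (W2 i)" using mn1 w0 \<open>0 < i\<close> \<open>i < N\<close> by simp
        qed
        have h2: "p (W2 1) < p (W2 (N - 1))"
          using False pne1[of 1 "N - 1"] N4 w1 wn by fastforce
        show ?thesis by (rule finish[OF cyc2 minl N4 inj NCp sym irr mn2 h2])
      qed
    qed
  qed
qed

theorem theorem4:
  fixes V :: "'a set" and E :: "'a \<Rightarrow> 'a \<Rightarrow> bool"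
  assumes "simple_graph V E"
  shows "admits_F_free_circular_ordering V E \<longleftrightarrow> is_forest V E"
proof
  assume "admits_F_free_circular_ordering V E"
  then obtain C where C: "circular_ordering V C" "\<forall>P\<in>set forbidden. \<not> contains_pattern V E C P"
    unfolding admits_F_free_circular_ordering_def by blast
  obtain p where p: "inj_on p V" "C = CO V p" using circ_E[OF C(1)] by blast
  show "is_forest V E"
  proof (rule ccontr)
    assume "\<not> is_forest V E"
    then show False using nonforest_pat[OF assms p(1)] C(2) p(2) by blast
  qed
next
  assume F: "is_forest V E"
  have fin: "finite V" using assms unfolding simple_graph_def by auto
  obtain p col where G: "good V E p col" using exists_good fin assms F by blast
  have inj: "inj_on p V" using G unfolding good_def by auto
  show "admits_F_free_circular_ordering V E"
    unfolding admits_F_free_circular_ordering_def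
    using circ_CO[OF inj] no_pattern[OF assms F G] by blast
qed


end
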